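(* Let $M\cong\mathbb Z^d$, $\Sigma$, $v_1,\ldots,v_n$, $\mathcal A$, $\bar M$, $\bar N$, $\mathbf v_0,\ldots,\mathbf v_n$, $K$ and $\Psi_{\mathbf p}$ be as in the context, with $\mathbb P_\Sigma$ nef-Fano. Then for every $\mathbf p\in K\cap\bar M$ and every $\mathbf n\in\bar N=\mathrm{Hom}(\bar M,\mathbb Z)$, $$\sum_{i=0}^na_i(\mathbf n\cdot\mathbf v_i)\Psi_{\mathbf p+\mathbf v_i}=0,$$ where $a_0=1$.
   Context: $M\cong\mathbb Z^d$ is a lattice with dual $N$; $\Sigma$ is a complete simplicial fan in $M_{\mathbb R}$ with minimal ray generators $v_1,\ldots,v_n$; $\mathbb P_\Sigma$ is nef-Fano (in particular every $v_i$ lies on the boundary of $\mathrm{conv}(v_1,\ldots,v_n)$). For $k\ge0$, $A_k$ is the quotient of $\mathbb C[D_1,\ldots,D_n]$ by the linear elements $\sum_i(\lambda\cdot v_i)D_i$ ($\lambda\in N$) and the monomials $\prod_iD_i^{r_i}$ such that no cone of $\Sigma$ contains all $v_i$ with $r_i>k$; $\mathcal A$ is the direct limit of the $A_k$ under the maps $A_k\to A_{k+l}$ given by multiplication by $\prod_iD_i^l$. Put $D_0=-\sum_iD_i$. Let $\bar M=M\oplus\mathbb Z$, $\mathbf v_i=v_i\oplus1$ ($1\le i\le n$), $\mathbf v_0=\mathbf 0\oplus1$, $K$ the cone spanned by $\mathbf v_0,\ldots,\mathbf v_n$. For $\beta=(b_0,\ldots,b_n)\in\mathbb Z^{n+1}$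 with $b_0\le0$, $\Phi_\beta\in\mathcal A$ is the image of $D_0^{-b_0}\prod_{i=1}^nD_i^{k-b_i}\in A_k$ for $k\ge\max_ib_i$. For $\mathbf p\in K\cap\bar M$, $\Psi_{\mathbf p}=\sum_{\beta:\sum_{i=0}^nb_i\mathbf v_i=-\mathbf p,\ b_0\le0}\Phi_\beta\prod_{i=1}^na_i^{b_i}$, a formal Laurent series in $a_1,\ldots,a_n$ with coefficients in $\mathcal A$. *)

theory Defs
  imports "HOL-Analysis.Analysis" "HOL-Library.Poly_Mapping"
begin

text \<open>M = int^'d, N = int^'d (dual via the standard pairing); rays v_1..v_n
  are indexed by {1..n}; a fan is a set of index sets (cones spanned by the v_i, i in S).\<close>

definition lpair :: "int^'d \<Rightarrow> int^'d \<Rightarrow> int" where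
  "lpair l x = (\<Sum>j\<in>UNIV. l$j * x$j)"

definition rvec :: "int^'d \<Rightarrow> real^'d" where
  "rvec x = (\<chi> j. of_int (x$j))"

definition scone :: "(nat \<Rightarrow> int^'d) \<Rightarrow> nat set \<Rightarrow> (real^'d) set" where
  "scone v S = {x. \<exists>\<mu>. (\<forall>i\<in>S. \<mu> i \<ge> 0) \<and> x = (\<Sum>i\<in>S. \<mu> i *\<^sub>R rvec (v i))}"

definition primitive_vec :: "int^'d \<Rightarrow> bool" where
  "primitive_vec x \<longleftrightarrow> x \<noteq> 0 \<and> (\<forall>(t::int) w. x = t *s w \<longrightarrow> \<bar>t\<bar> = 1)"

definition complete_simplicial_fan :: "nat \<Rightarrow> (nat \<Rightarrow> int^'d) \<Rightarrow> nat set set \<Rightarrow> bool" where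
  "complete_simplicial_fan n v \<Sigma> \<longleftrightarrow>
     (\<forall>S\<in>\<Sigma>. S \<subseteq> {1..n}) \<and>
     (\<forall>S\<in>\<Sigma>. \<forall>T. T \<subseteq> S \<longrightarrow> T \<in> \<Sigma>) \<and>
     (\<forall>i\<in>{1..n}. {i} \<in> \<Sigma>) \<and>
     (\<forall>S\<in>\<Sigma>. inj_on (\<lambda>i. rvec (v i)) S \<and> independent ((\<lambda>i. rvec (v i)) ` S)) \<and>
     (\<forall>S\<in>\<Sigma>. \<forall>T\<in>\<Sigma>. scone v S \<inter> scone v T = scone v (S \<inter> T)) \<and>
     (\<Union>S\<in>\<Sigma>. scone v S) = UNIV \<and>
     (\<forall>i\<in>{1..n}. primitive_vec (v i))"

definition max_cone :: "nat set set \<Rightarrow> nat set \<Rightarrow> bool" where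
  "max_cone \<Sigma> S \<longleftrightarrow> S \<in> \<Sigma> \<and> (\<forall>T\<in>\<Sigma>. S \<subseteq> T \<longrightarrow> T = S)"

text \<open>P_Sigma projective: some torus-invariant R-divisor sum h_i D_i has strictly convex
  support function.\<close>
definition projective_fan :: "nat \<Rightarrow> (nat \<Rightarrow> int^'d) \<Rightarrow> nat set set \<Rightarrow> bool" where
  "projective_fan n v \<Sigma> \<longleftrightarrow> (\<exists>h::nat \<Rightarrow> real. \<forall>S. max_cone \<Sigma> S \<longrightarrow>
     (\<exists>u::real^'d. (\<forall>i\<in>S. u \<bullet> rvec (v i) = h i) \<and> (\<forall>j\<in>{1..n} - S. u \<bullet> rvec (v j) < h j)))"

text \<open>-K = sum D_i is nef: its support function is convex.\<close>
definition anticanonical_nef :: "nat \<Rightarrow> (nat \<Rightarrow> int^'d) \<Rightarrow> nat set set \<Rightarrow> bool" where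
  "anticanonical_nef n v \<Sigma> \<longleftrightarrow> (\<forall>S. max_cone \<Sigma> S \<longrightarrow>
     (\<exists>u::real^'d. (\<forall>i\<in>S. u \<bullet> rvec (v i) = 1) \<and> (\<forall>j\<in>{1..n}. u \<bullet> rvec (v j) \<le> 1)))"

definition nef_Fano :: "nat \<Rightarrow> (nat \<Rightarrow> int^'d) \<Rightarrow> nat set set \<Rightarrow> bool" where
  "nef_Fano n v \<Sigma> \<longleftrightarrow> projective_fan n v \<Sigma> \<and> anticanonical_nef n v \<Sigma>"

type_synonym cpoly = "(nat \<Rightarrow>\<^sub>0 nat) \<Rightarrow>\<^sub>0 complex"

definition Dvar :: "nat \<Rightarrow> cpoly" where
  "Dvar i = Poly_Mapping.single (Poly_Mapping.single i 1) 1"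

definition D0 :: "nat \<Rightarrow> cpoly" where
  "D0 n = - (\<Sum>i=1..n. Dvar i)"

definition Dprod :: "nat \<Rightarrow> cpoly" where
  "Dprod n = (\<Prod>i=1..n. Dvar i)"

definition ideal_gen :: "'a::comm_ring_1 set \<Rightarrow> 'a set" where
  "ideal_gen G = {x. \<exists>F h. finite F \<and> F \<subseteq> G \<and> x = (\<Sum>g\<in>F. h g * g)}"

definition Aideal :: "nat \<Rightarrow> (nat \<Rightarrow> int^'d) \<Rightarrow> nat set set \<Rightarrow> nat \<Rightarrow> cpoly set" where
  "Aideal n v \<Sigma> k = ideal_gen
     ({(\<Sum>i=1..n. of_int (lpair l (v i)) * Dvar i) | l. True} \<union>
      {(\<Prod>i=1..n. Dvar i ^ r i) | r::nat \<Rightarrow> nat.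
          \<not> (\<exists>S\<in>\<Sigma>. {i\<in>{1..n}. r i > k} \<subseteq> S)})"

text \<open>Elements of the direct limit are represented by pairs (k, f), f a representative of an
  element of A_k; (k,f) is identified with (k+l, f * (D_1...D_n)^l).\<close>
type_synonym alim = "nat \<times> cpoly"

definition alim_zero :: "nat \<Rightarrow> (nat \<Rightarrow> int^'d) \<Rightarrow> nat set set \<Rightarrow> alim \<Rightarrow> bool" where
  "alim_zero n v \<Sigma> x \<longleftrightarrow> (\<exists>l. snd x * Dprod n ^ l \<in> Aideal n v \<Sigma> (fst x + l))"

definition alim_smult :: "int \<Rightarrow> alim \<Rightarrow> alim" where
  "alim_smult c x = (fst x, of_int c * snd x)"

definition alim_sum :: "nat \<Rightarrow> (nat \<Rightarrow> alim) \<Rightarrow> nat set \<Rightarrow> alim" where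
  "alim_sum n F I = (let m = Max (fst ` F ` I) in
      (m, \<Sum>i\<in>I. snd (F i) * Dprod n ^ (m - fst (F i))))"

definition Phi :: "nat \<Rightarrow> int \<Rightarrow> (nat \<Rightarrow> int) \<Rightarrow> alim" where
  "Phi n b0 b = (let k = Max ({0} \<union> b ` {1..n}) in
     (nat k, D0 n ^ nat (- b0) * (\<Prod>i=1..n. Dvar i ^ nat (k - b i))))"

text \<open>Mbar = M x Z, Nbar = N x Z.\<close>
definition vbar :: "(nat \<Rightarrow> int^'d) \<Rightarrow> nat \<Rightarrow> (int^'d) \<times> int" where
  "vbar v i = (if i = 0 then (0, 1) else (v i, 1))"

definition bpair :: "(int^'d) \<times> int \<Rightarrow> (int^'d) \<times> int \<Rightarrow> int" where
  "bpair nn x = lpair (fst nn) (fst x) + snd nn * snd x"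

definition in_K :: "nat \<Rightarrow> (nat \<Rightarrow> int^'d) \<Rightarrow> (int^'d) \<times> int \<Rightarrow> bool" where
  "in_K n v p \<longleftrightarrow> (\<exists>\<mu>::nat \<Rightarrow> real. (\<forall>i\<in>{0..n}. \<mu> i \<ge> 0) \<and>
      rvec (fst p) = (\<Sum>i\<in>{0..n}. \<mu> i *\<^sub>R rvec (fst (vbar v i))) \<and>
      of_int (snd p) = (\<Sum>i\<in>{0..n}. \<mu> i))"

text \<open>Coefficient of the monomial prod_{i=1}^n a_i^(c_i) in Psi_p (a formal Laurent series in
  a_1..a_n with coefficients in the direct limit).  The unique beta contributing has
  (b_1..b_n) = c and b_0 determined by the last coordinate.\<close>
definition Psi_coeff :: "nat \<Rightarrow> (nat \<Rightarrow> int^'d) \<Rightarrow> (int^'d) \<times> int \<Rightarrow> (nat \<Rightarrow> int) \<Rightarrow> alim" where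
  "Psi_coeff n v p c = (let b0 = - snd p - (\<Sum>i=1..n. c i) in
     if b0 \<le> 0 \<and> (\<Sum>i=1..n. c i *s v i) = - fst p then Phi n b0 c else (0, 0))"

end

theory Submission
  imports Defs
begin

lemma ideal_gen_0: "0 \<in> ideal_gen G"
  unfolding ideal_gen_def by (rule CollectI, rule exI[of _ "{}"]) simp

lemma ideal_gen_mult: "g \<in> G \<Longrightarrow> x * g \<in> ideal_gen G"
  unfolding ideal_gen_def
  by (rule CollectI, rule exI[of _ "{g}"], rule exI[of _ "\<lambda>_. x"]) simp

definition Kf :: "nat \<Rightarrow> (nat \<Rightarrow> int) \<Rightarrow> int" where
  "Kf n b = Max ({0} \<union> b ` {1..n})"

lemma Kf_ge0: "Kf n b \<ge> 0"
  unfolding Kf_def by (rule Max_ge) auto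

lemma Kf_ge: "j \<in> {1..n} \<Longrightarrow> b j \<le> Kf n b"
  unfolding Kf_def by (rule Max_ge) auto

lemma Phi_eq: "Phi n b0 b = (nat (Kf n b), D0 n ^ nat (- b0) * (\<Prod>i=1..n. Dvar i ^ nat (Kf n b - b i)))"
  unfolding Phi_def Kf_def Let_def by simp

lemma prod_shift:
  fixes X :: "nat \<Rightarrow> 'a::comm_semiring_1"
  assumes "finite I" "\<forall>j\<in>I. c j \<le> K" "K \<le> M"
  shows "(\<Prod>j\<in>I. X j ^ nat (K - c j)) * (\<Prod>j\<in>I. X j) ^ nat (M - K) = (\<Prod>j\<in>I. X j ^ nat (M - c j))"
proof -
  have "(\<Prod>j\<in>I. X j ^ nat (K - c j)) * (\<Prod>j\<in>I. X j) ^ nat (M - K)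
      = (\<Prod>j\<in>I. X j ^ nat (K - c j) * X j ^ nat (M - K))"
    by (simp add: prod_power_distrib[of X] prod.distrib)
  also have "\<dots> = (\<Prod>j\<in>I. X j ^ nat (M - c j))"
  proof (rule prod.cong)
    fix j assume "j \<in> I"
    then have "nat (K - c j) + nat (M - K) = nat (M - c j)" using assms by auto
    then show "X j ^ nat (K - c j) * X j ^ nat (M - K) = X j ^ nat (M - c j)"
      by (metis power_add)
  qed simp
  finally show ?thesis .
qed

lemma prod_upd:
  fixes X :: "nat \<Rightarrow> 'a::comm_semiring_1"
  assumes "finite I" "i \<in> I" "c i \<le> M"
  shows "(\<Prod>j\<in>I. X j ^ nat (M - (c(i := c i - 1)) j)) = X i * (\<Prod>j\<in>I. X j ^ nat (M - c j))"
proof -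
  have "(\<Prod>j\<in>I. X j ^ nat (M - (c(i := c i - 1)) j)) =
     X i ^ nat (M - (c i - 1)) * (\<Prod>j\<in>I - {i}. X j ^ nat (M - (c(i := c i - 1)) j))"
    using assms by (simp add: prod.remove)
  also have "(\<Prod>j\<in>I - {i}. X j ^ nat (M - (c(i := c i - 1)) j)) = (\<Prod>j\<in>I - {i}. X j ^ nat (M - c j))"
    by (rule prod.cong) auto
  also have "nat (M - (c i - 1)) = Suc (nat (M - c i))" using assms by auto
  finally show ?thesis using assms by (simp add: prod.remove mult_ac)
qed

lemma sum_upd:
  fixes f :: "'b \<Rightarrow> nat \<Rightarrow> 'a::ab_group_add"
  assumes "finite I" "i \<in> I"
  shows "(\<Sum>j\<in>I. f ((c(i := x)) j) j) = (\<Sum>j\<in>I. f (c j) j) - f (c i) i + f x i"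
proof -
  have "(\<Sum>j\<in>I. f ((c(i := x)) j) j) = f x i + (\<Sum>j\<in>I - {i}. f ((c(i := x)) j) j)"
    using assms by (simp add: sum.remove)
  also have "(\<Sum>j\<in>I - {i}. f ((c(i := x)) j) j) = (\<Sum>j\<in>I - {i}. f (c j) j)"
    by (rule sum.cong) auto
  finally show ?thesis using assms by (simp add: sum.remove algebra_simps)
qed

lemma rvec_add: "rvec (x + y) = rvec x + rvec y"
  by (simp add: rvec_def vec_eq_iff)
lemma rvec_uminus: "rvec (- x) = - rvec x"
  by (simp add: rvec_def vec_eq_iff)
lemma rvec_smult: "rvec (a *s x) = of_int a *\<^sub>R rvec x"
  by (simp add: rvec_def vec_eq_iff)
lemma rvec_zero: "rvec 0 = 0"
  by (simp add: rvec_def vec_eq_iff)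
lemma rvec_sum: "rvec (\<Sum>j\<in>I. f j) = (\<Sum>j\<in>I. rvec (f j))"
  by (simp add: rvec_def vec_eq_iff)

lemma neg_not_in_cone:
  fixes v :: "nat \<Rightarrow> int^'d" and p :: "(int^'d) \<times> int" and c :: "nat \<Rightarrow> int"
  assumes fan: "complete_simplicial_fan n v \<Sigma>" and nef: "nef_Fano n v \<Sigma>" and K: "in_K n v p"
    and hc: "(\<Sum>j=1..n. c j *s v j) = - fst p" and hB: "- snd p - (\<Sum>j=1..n. c j) = 1"
  shows "\<not> (\<exists>S\<in>\<Sigma>. {j\<in>{1..n}. c j < 0} \<subseteq> S)"
proof
  assume "\<exists>S\<in>\<Sigma>. {j\<in>{1..n}. c j < 0} \<subseteq> S"
  then obtain S where S: "S \<in> \<Sigma>" "{j\<in>{1..n}. c j < 0} \<subseteq> S" by blast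
  have "\<forall>S\<in>\<Sigma>. S \<subseteq> {1..n}" using fan unfolding complete_simplicial_fan_def by (rule conjunct1)
  then have "\<Sigma> \<subseteq> Pow {1..n}" by blast
  then have fin: "finite \<Sigma>" by (rule finite_subset) simp
  then have "finite {T\<in>\<Sigma>. S \<subseteq> T}" by simp
  moreover have "{T\<in>\<Sigma>. S \<subseteq> T} \<noteq> {}" using S by blast
  ultimately obtain T where T: "T \<in> {T\<in>\<Sigma>. S \<subseteq> T}"
      and Tmax: "\<forall>b\<in>{T\<in>\<Sigma>. S \<subseteq> T}. T \<le> b \<longrightarrow> T = b"
    using finite_has_maximal[of "{T\<in>\<Sigma>. S \<subseteq> T}"] by blast
  have "max_cone \<Sigma> T" unfolding max_cone_def using T Tmax by blast
  then obtain u :: "real^'d" where u1: "\<forall>i\<in>T. u \<bullet> rvec (v i) = 1"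
      and u2: "\<forall>j\<in>{1..n}. u \<bullet> rvec (v j) \<le> 1"
  proof -
    have "anticanonical_nef n v \<Sigma>" using nef unfolding nef_Fano_def by (rule conjunct2)
    then show ?thesis using that \<open>max_cone \<Sigma> T\<close> unfolding anticanonical_nef_def by blast
  qed
  obtain \<mu> :: "nat \<Rightarrow> real" where \<mu>0: "\<forall>i\<in>{0..n}. \<mu> i \<ge> 0"
    and hfst: "rvec (fst p) = (\<Sum>i\<in>{0..n}. \<mu> i *\<^sub>R rvec (fst (vbar v i)))"
    and hsnd: "of_int (snd p) = (\<Sum>i\<in>{0..n}. \<mu> i)"
    using K unfolding in_K_def by blast
  have "u \<bullet> rvec (fst p) = (\<Sum>i\<in>{0..n}. \<mu> i * (u \<bullet> rvec (fst (vbar v i))))"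
    by (simp add: hfst inner_sum_right)
  also have "\<dots> \<le> (\<Sum>i\<in>{0..n}. \<mu> i)"
  proof (rule sum_mono)
    fix i assume i: "i \<in> {0..n}"
    show "\<mu> i * (u \<bullet> rvec (fst (vbar v i))) \<le> \<mu> i"
    proof (cases "i = 0")
      case True then show ?thesis using \<mu>0 i by (simp add: vbar_def rvec_zero)
    next
      case False
      then have "u \<bullet> rvec (fst (vbar v i)) \<le> 1" using u2 i by (simp add: vbar_def)
      then show ?thesis using \<mu>0 i mult_left_mono[of _ 1 "\<mu> i"] by auto
    qed
  qed
  finally have up: "u \<bullet> rvec (fst p) \<le> of_int (snd p)" using hsnd by simp
  have "rvec (fst p) = - (\<Sum>j=1..n. of_int (c j) *\<^sub>R rvec (v j))"
    using arg_cong[OF hc, of rvec] by (simp add: rvec_uminus rvec_sum rvec_smult)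
  then have "u \<bullet> rvec (fst p) = (\<Sum>j=1..n. (- of_int (c j)) * (u \<bullet> rvec (v j)))"
    by (simp add: inner_sum_right sum_negf)
  also have "\<dots> \<ge> (\<Sum>j=1..n. (- of_int (c j)))"
  proof (rule sum_mono)
    fix j assume j: "j \<in> {1..n}"
    show "- real_of_int (c j) \<le> - real_of_int (c j) * (u \<bullet> rvec (v j))"
    proof (cases "c j < 0")
      case True then have "j \<in> T" using S T j by auto
      then show ?thesis using u1 by simp
    next
      case False
      then have "real_of_int (c j) * (u \<bullet> rvec (v j)) \<le> real_of_int (c j) * 1"
        using u2 j by (intro mult_left_mono) auto
      then show ?thesis by simp
    qed
  qed
  finally have "u \<bullet> rvec (fst p) \<ge> - (\<Sum>j=1..n. of_int (c j))" by (simp add: sum_negf)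
  moreover have "- (\<Sum>j=1..n. real_of_int (c j)) = of_int (snd p) + 1"
    using arg_cong[OF hB, of real_of_int] by simp
  ultimately show False using up by simp
qed

lemma Psi_coeff_eq: "Psi_coeff n v q d = (if - snd q - (\<Sum>i=1..n. d i) \<le> 0 \<and> (\<Sum>i=1..n. d i *s v i) = - fst q
     then Phi n (- snd q - (\<Sum>i=1..n. d i)) d else (0, 0))"
  unfolding Psi_coeff_def Let_def by simp

lemma sum_split0: "(\<Sum>i\<in>{0..n}. f i) = f 0 + (\<Sum>i=1..n. f (i::nat))"
proof -
  have "{0..n} = insert 0 {1..n}" by auto
  then show ?thesis by simp
qed

theorem proposition3p5:
  fixes n :: nat and v :: "nat \<Rightarrow> int^'d" and \<Sigma> :: "nat set set"
    and p :: "(int^'d) \<times> int" and nn :: "(int^'d) \<times> int" and c :: "nat \<Rightarrow> int"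
  assumes "complete_simplicial_fan n v \<Sigma>"
    and "nef_Fano n v \<Sigma>"
    and "in_K n v p"
  shows "alim_zero n v \<Sigma>
           (alim_sum n (\<lambda>i. alim_smult (bpair nn (vbar v i))
               (Psi_coeff n v (p + vbar v i) (if i = 0 then c else c(i := c i - 1)))) {0..n})"
proof -
  obtain l s where nn: "nn = (l, s)" by (cases nn)
  define B where "B = - snd p - (\<Sum>i=1..n. c i)"
  define c' where "c' = (\<lambda>i::nat. if i = 0 then c else c(i := c i - 1))"
  define t where "t = (\<lambda>i. bpair nn (vbar v i))"
  define F where "F = (\<lambda>i. alim_smult (t i) (Psi_coeff n v (p + vbar v i) (c' i)))"
  define cond where "cond \<longleftrightarrow> (\<Sum>j=1..n. c j *s v j) = - fst p"
  define m where "m = Max (fst ` F ` {0..n})"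
  define Sm where "Sm = (\<Sum>i\<in>{0..n}. snd (F i) * Dprod n ^ (m - fst (F i)))"
  have eq: "alim_sum n F {0..n} = (m, Sm)" by (simp add: alim_sum_def Let_def m_def Sm_def)
  have t0: "t 0 = s" by (simp add: t_def nn bpair_def vbar_def lpair_def)
  have ti: "t i = lpair l (v i) + s" if "i \<noteq> 0" for i
    using that by (simp add: t_def nn bpair_def vbar_def)
  have P0: "Psi_coeff n v (p + vbar v 0) (c' 0) = (if B - 1 \<le> 0 \<and> cond then Phi n (B - 1) c else (0,0))"
  proof -
    have "- snd (p + vbar v 0) - (\<Sum>i=1..n. c' 0 i) = B - 1" by (simp add: vbar_def B_def c'_def)
    moreover have "(\<Sum>i=1..n. c' 0 i *s v i) = - fst (p + vbar v 0) \<longleftrightarrow> cond"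
      by (simp add: vbar_def cond_def c'_def)
    ultimately show ?thesis unfolding Psi_coeff_eq by (simp add: c'_def)
  qed
  have Pi: "Psi_coeff n v (p + vbar v i) (c' i) = (if B \<le> 0 \<and> cond then Phi n B (c' i) else (0,0))"
    if i: "i \<in> {1..n}" for i
  proof -
    have i0: "i \<noteq> 0" using i by auto
    have "(\<Sum>j=1..n. c' i j) = (\<Sum>j=1..n. c j) - c i + (c i - 1)"
      using sum_upd[of "{1..n}" i "\<lambda>x j. x" c "c i - 1"] i i0 by (simp add: c'_def)
    then have "- snd (p + vbar v i) - (\<Sum>j=1..n. c' i j) = B" using i0 by (simp add: vbar_def B_def)
    moreover have "(\<Sum>j=1..n. c' i j *s v j) = (\<Sum>j=1..n. c j *s v j) - c i *s v i + (c i - 1) *s v i"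
      using sum_upd[of "{1..n}" i "\<lambda>x j. x *s v j" c "c i - 1"] i i0 by (simp add: c'_def)
    then have "(\<Sum>j=1..n. c' i j *s v j) = - fst (p + vbar v i) \<longleftrightarrow> cond"
      using i0 by (auto simp add: vbar_def cond_def vector_sub_rdistrib algebra_simps)
    ultimately show ?thesis unfolding Psi_coeff_eq by simp
  qed
  have fin: "finite (fst ` F ` {0..n})" by simp
  have mge: "fst (F i) \<le> m" if "i \<in> {0..n}" for i
    unfolding m_def using that fin by (intro Max_ge) auto
  have key: "Sm \<in> Aideal n v \<Sigma> m"
  proof (cases "B \<le> 0 \<and> cond")
    case True
    then have hB: "B \<le> 0" and cd: cond by auto
    define Q where "Q = D0 n ^ nat (-B) * (\<Prod>j=1..n. Dvar j ^ nat (int m - c j))"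
    have nB: "nat (- (B - 1)) = Suc (nat (-B))" using hB by auto
    have F0: "F 0 = (nat (Kf n c), of_int s * (D0 n ^ Suc (nat (-B)) * (\<Prod>j=1..n. Dvar j ^ nat (Kf n c - c j))))"
      using hB cd nB by (simp add: F_def P0 t0 Phi_eq alim_smult_def)
    have Fi: "F i = (nat (Kf n (c' i)), of_int (lpair l (v i) + s) *
        (D0 n ^ nat (-B) * (\<Prod>j=1..n. Dvar j ^ nat (Kf n (c' i) - c' i j))))" if i: "i \<in> {1..n}" for i
      using hB cd i ti[of i] by (simp add: F_def Pi Phi_eq alim_smult_def)
    have Dp: "Dprod n ^ (m - nat K) = (\<Prod>j=1..n. Dvar j) ^ nat (int m - K)" if "K \<ge> 0" "nat K \<le> m" for K
    proof -
      have "m - nat K = nat (int m - K)" using that by linarith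
      then show ?thesis by (simp add: Dprod_def)
    qed
    have km: "Kf n c \<le> int m" using mge[of 0] F0 Kf_ge0[of n c] by simp
    have cm: "c j \<le> int m" if "j \<in> {1..n}" for j using Kf_ge[OF that, of c] km by simp
    have T0: "snd (F 0) * Dprod n ^ (m - fst (F 0)) = of_int s * (Q * D0 n)"
    proof -
      have "snd (F 0) * Dprod n ^ (m - fst (F 0)) = of_int s * (D0 n ^ Suc (nat (-B)) *
         ((\<Prod>j=1..n. Dvar j ^ nat (Kf n c - c j)) * (\<Prod>j=1..n. Dvar j) ^ nat (int m - Kf n c)))"
        using F0 Dp[of "Kf n c"] Kf_ge0[of n c] mge[of 0] by (simp add: mult_ac)
      also have "(\<Prod>j=1..n. Dvar j ^ nat (Kf n c - c j)) * (\<Prod>j=1..n. Dvar j) ^ nat (int m - Kf n c)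
          = (\<Prod>j=1..n. Dvar j ^ nat (int m - c j))"
        using km Kf_ge[of _ n c] by (intro prod_shift) auto
      finally show ?thesis by (simp add: Q_def mult_ac)
    qed
    have Ti: "snd (F i) * Dprod n ^ (m - fst (F i)) = of_int (lpair l (v i) + s) * (Q * Dvar i)"
      if i: "i \<in> {1..n}" for i
    proof -
      have kmi: "Kf n (c' i) \<le> int m" using mge[of i] Fi[OF i] Kf_ge0[of n "c' i"] i by simp
      have "snd (F i) * Dprod n ^ (m - fst (F i)) = of_int (lpair l (v i) + s) * (D0 n ^ nat (-B) *
         ((\<Prod>j=1..n. Dvar j ^ nat (Kf n (c' i) - c' i j)) * (\<Prod>j=1..n. Dvar j) ^ nat (int m - Kf n (c' i))))"
        using Fi[OF i] Dp[of "Kf n (c' i)"] Kf_ge0[of n "c' i"] mge[of i] i by (simp add: mult_ac)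
      also have "(\<Prod>j=1..n. Dvar j ^ nat (Kf n (c' i) - c' i j)) * (\<Prod>j=1..n. Dvar j) ^ nat (int m - Kf n (c' i))
          = (\<Prod>j=1..n. Dvar j ^ nat (int m - c' i j))"
        using kmi Kf_ge[of _ n "c' i"] by (intro prod_shift) auto
      also have "(\<Prod>j=1..n. Dvar j ^ nat (int m - c' i j)) = Dvar i * (\<Prod>j=1..n. Dvar j ^ nat (int m - c j))"
        using prod_upd[of "{1..n}" i c "int m" Dvar] i cm[OF i] by (simp add: c'_def)
      finally show ?thesis by (simp add: Q_def mult_ac)
    qed
    have "Sm = of_int s * (Q * D0 n) + (\<Sum>i=1..n. of_int (lpair l (v i) + s) * (Q * Dvar i))"
      unfolding Sm_def sum_split0 using T0 Ti by simp
    also have "\<dots> = Q * (\<Sum>i=1..n. of_int (lpair l (v i)) * Dvar i)"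
      by (simp add: D0_def algebra_simps sum.distrib sum_distrib_left sum_negf)
    finally have "Sm = Q * (\<Sum>i=1..n. of_int (lpair l (v i)) * Dvar i)" .
    moreover have "(\<Sum>i=1..n. of_int (lpair l (v i)) * Dvar i) \<in>
       {(\<Sum>i=1..n. of_int (lpair l (v i)) * Dvar i) | l. True}" by blast
    ultimately show ?thesis unfolding Aideal_def by (auto intro: ideal_gen_mult)
  next
    case notA: False
    show ?thesis
    proof (cases "B = 1 \<and> cond")
      case True
      then have B1: "B = 1" and cd: cond by auto
      define r where "r = (\<lambda>j. nat (Kf n c - c j))"
      have F0: "F 0 = (nat (Kf n c), of_int s * (\<Prod>j=1..n. Dvar j ^ r j))"
        using B1 cd by (simp add: F_def P0 t0 Phi_eq alim_smult_def r_def)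
      have Fi: "F i = (0, 0)" if "i \<in> {1..n}" for i
        using B1 that by (simp add: F_def Pi alim_smult_def)
      have m: "m = nat (Kf n c)"
        unfolding m_def
      proof (rule Max_eqI)
        show "nat (Kf n c) \<in> fst ` F ` {0..n}" using F0 by force
      next
        fix y assume "y \<in> fst ` F ` {0..n}"
        then obtain i where i: "i \<in> {0..n}" "y = fst (F i)" by auto
        show "y \<le> nat (Kf n c)"
        proof (cases "i = 0")
          case True then show ?thesis using i F0 by simp
        next
          case False then have "i \<in> {1..n}" using i by auto
          then show ?thesis using i Fi by simp
        qed
      qed simp
      have "Sm = of_int s * (\<Prod>j=1..n. Dvar j ^ r j)"
        unfolding Sm_def sum_split0 using F0 Fi m by simp
      moreover have "(\<Prod>j=1..n. Dvar j ^ r j) \<in> {(\<Prod>i=1..n. Dvar i ^ r i) | r::nat \<Rightarrow> nat.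
          \<not> (\<exists>S\<in>\<Sigma>. {i\<in>{1..n}. r i > m} \<subseteq> S)}"
      proof (rule CollectI, rule exI[of _ r], rule conjI[OF refl])
        have "{i\<in>{1..n}. r i > m} = {j\<in>{1..n}. c j < 0}"
          using m Kf_ge0[of n c] by (auto simp: r_def)
        moreover have "\<not> (\<exists>S\<in>\<Sigma>. {j\<in>{1..n}. c j < 0} \<subseteq> S)"
          using neg_not_in_cone[OF assms] cd B1 by (simp add: cond_def B_def)
        ultimately show "\<not> (\<exists>S\<in>\<Sigma>. {i\<in>{1..n}. r i > m} \<subseteq> S)" by simp
      qed
      ultimately show ?thesis unfolding Aideal_def by (auto intro: ideal_gen_mult)
    next
      case False
      have "snd (F i) = 0" if "i \<in> {0..n}" for i
      proof (cases "i = 0")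
        case True
        have "\<not> (B - 1 \<le> 0 \<and> cond)" using notA False by auto
        then show ?thesis using True by (auto simp add: F_def P0 alim_smult_def)
      next
        case i0: False
        then have "i \<in> {1..n}" using that by auto
        then show ?thesis using notA by (auto simp add: F_def Pi alim_smult_def)
      qed
      then have "Sm = 0" unfolding Sm_def by simp
      then show ?thesis by (simp add: Aideal_def ideal_gen_0)
    qed
  qed
  have "alim_zero n v \<Sigma> (alim_sum n F {0..n})"
    unfolding eq alim_zero_def by (rule exI[of _ 0]) (simp add: key)
  then show ?thesis by (simp add: F_def t_def c'_def)
qed

end
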